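(* Let $\mathcal A_+,\mathcal A_-\subseteq\mathbb Z^n$ be disjoint finite sets with $\mathcal A=\mathcal A_+\cup\mathcal A_-$ full dimensional. If $\nabla_{>0}(\mathcal A_+,\mathcal A_-)\neq\varnothing$, then $\tau(\nabla_{\mathbb C}(\mathcal A))$ equals the Zariski closure of $\nabla_{>0}(\mathcal A_+,\mathcal A_-)$ in $\mathbb C^{\mathcal A}$.
   Context: For disjoint finite $\mathcal A_+,\mathcal A_-\subseteq\mathbb Z^n$, a signomial with signed support $(\mathcal A_+,\mathcal A_-)$ is $f_c(x)=\sum_{a\in\mathcal A_+}c_ax^a-\sum_{b\in\mathcal A_-}c_bx^b$ with $c\in\mathbb R^{\mathcal A}_{>0}$ (nonsigned coefficients). Its critical system is $F(c,x)=(f_c(x),x_1\partial_{x_1}f_c(x),\dots,x_n\partial_{x_n}f_c(x))$, and $\nabla_{>0}(\mathcal A_+,\mathcal A_-)=\{c\in\mathbb R^{\mathcal A}_{>0}:F(c,x)=0\text{ for some }x\in\mathbb R^n_{>0}\}$. $\mathcal A$ is full dimensional if $\dim\operatorname{conv}(\mathcal A)=n$. The $\mathcal A$-discriminant variety $\nabla_{\mathbb C}(\mathcal A)$ is the Zariski closure in $\mathbb C^{\mathcal A}$ of the set of $c\in\mathbb C^{\mathcal A}$ such that $\sum_{a\in\mathcal A}c_ax^a$ has a singular zero in $(\mathbb C^* )^n$, i.e. a point where it and all $x_i\partial_{x_i}$ of it vanish. Let $\sigma\in\{\pm1\}^{\mathcal A}$ with $\sigma_a=1$ for $a\in\mathcal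 A_+$, $\sigma_a=-1$ for $a\in\mathcal A_-$, and $\tau:\mathbb C^{\mathcal A}\to\mathbb C^{\mathcal A}$, $\tau(x)=(\sigma_ax_a)_a$. *)

theory Defs
  imports "HOL-Analysis.Analysis"
begin

text \<open>Exponent vectors live in \<open>int ^ 'n\<close> (so \<open>\<int>^n\<close> with \<open>n = CARD('n)\<close>).
  Coefficient vectors in \<open>\<complex>^\<A>\<close> are functions \<open>int ^ 'n \<Rightarrow> complex\<close> vanishing off \<open>\<A>\<close>.\<close>

definition lmono_real :: "real ^ 'n \<Rightarrow> int ^ 'n \<Rightarrow> real" where
  "lmono_real x a = (\<Prod>i\<in>UNIV. (x $ i) powi (a $ i))"

definition lmono_cplx :: "complex ^ 'n \<Rightarrow> int ^ 'n \<Rightarrow> complex" where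
  "lmono_cplx z a = (\<Prod>i\<in>UNIV. (z $ i) powi (a $ i))"

text \<open>The signomial \<open>f_c\<close> and its toric derivatives \<open>x_i \<partial>_{x_i} f_c\<close>
  (written out: \<open>x_i \<partial>_{x_i} x^a = a_i x^a\<close>).\<close>
definition signomial :: "(int ^ 'n) set \<Rightarrow> (int ^ 'n) set \<Rightarrow> (int ^ 'n \<Rightarrow> real) \<Rightarrow> real ^ 'n \<Rightarrow> real" where
  "signomial Ap Am c x = (\<Sum>a\<in>Ap. c a * lmono_real x a) - (\<Sum>b\<in>Am. c b * lmono_real x b)"

definition toric_deriv :: "(int ^ 'n) set \<Rightarrow> (int ^ 'n) set \<Rightarrow> (int ^ 'n \<Rightarrow> real) \<Rightarrow> 'n \<Rightarrow> real ^ 'n \<Rightarrow> real" where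
  "toric_deriv Ap Am c i x =
     (\<Sum>a\<in>Ap. c a * of_int (a $ i) * lmono_real x a) - (\<Sum>b\<in>Am. c b * of_int (b $ i) * lmono_real x b)"

definition critical_system_zero :: "(int ^ 'n) set \<Rightarrow> (int ^ 'n) set \<Rightarrow> (int ^ 'n \<Rightarrow> real) \<Rightarrow> real ^ 'n \<Rightarrow> bool" where
  "critical_system_zero Ap Am c x \<longleftrightarrow> signomial Ap Am c x = 0 \<and> (\<forall>i. toric_deriv Ap Am c i x = 0)"

definition pos_disc :: "(int ^ 'n) set \<Rightarrow> (int ^ 'n) set \<Rightarrow> (int ^ 'n \<Rightarrow> real) set" where
  "pos_disc Ap Am = {c. (\<forall>a\<in>Ap \<union> Am. c a > 0) \<and> (\<forall>a. a \<notin> Ap \<union> Am \<longrightarrow> c a = 0) \<and>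
      (\<exists>x :: real ^ 'n. (\<forall>i. x $ i > 0) \<and> critical_system_zero Ap Am c x)}"

definition coeff_space :: "'a set \<Rightarrow> ('a \<Rightarrow> complex) set" where
  "coeff_space A = {c. \<forall>a. a \<notin> A \<longrightarrow> c a = 0}"

inductive_set poly_fun :: "'a set \<Rightarrow> (('a \<Rightarrow> complex) \<Rightarrow> complex) set" for A where
  const: "(\<lambda>c. k) \<in> poly_fun A"
| var: "a \<in> A \<Longrightarrow> (\<lambda>c. c a) \<in> poly_fun A"
| add: "p \<in> poly_fun A \<Longrightarrow> q \<in> poly_fun A \<Longrightarrow> (\<lambda>c. p c + q c) \<in> poly_fun A"
| mult: "p \<in> poly_fun A \<Longrightarrow> q \<in> poly_fun A \<Longrightarrow> (\<lambda>c. p c * q c) \<in> poly_fun A"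

definition zariski_closed :: "'a set \<Rightarrow> ('a \<Rightarrow> complex) set \<Rightarrow> bool" where
  "zariski_closed A V \<longleftrightarrow>
     (\<exists>P. P \<subseteq> poly_fun A \<and> V = {c \<in> coeff_space A. \<forall>p\<in>P. p c = 0})"

definition zariski_closure :: "'a set \<Rightarrow> ('a \<Rightarrow> complex) set \<Rightarrow> ('a \<Rightarrow> complex) set" where
  "zariski_closure A S = \<Inter>{V. zariski_closed A V \<and> S \<subseteq> V}"

definition A_disc_variety :: "(int ^ 'n) set \<Rightarrow> (int ^ 'n \<Rightarrow> complex) set" where
  "A_disc_variety A = zariski_closure A
     {c \<in> coeff_space A. \<exists>z :: complex ^ 'n. (\<forall>i. z $ i \<noteq> 0) \<and>
        (\<Sum>a\<in>A. c a * lmono_cplx z a) = 0 \<and>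
        (\<forall>i. (\<Sum>a\<in>A. c a * of_int (a $ i) * lmono_cplx z a) = 0)}"

definition sign_tau :: "'a set \<Rightarrow> 'a set \<Rightarrow> ('a \<Rightarrow> complex) \<Rightarrow> ('a \<Rightarrow> complex)" where
  "sign_tau Ap Am c = (\<lambda>a. if a \<in> Am then - c a else c a)"

definition int_to_real_vec :: "int ^ 'n \<Rightarrow> real ^ 'n" where
  "int_to_real_vec a = (\<chi> i. real_of_int (a $ i))"

definition full_dimensional :: "(int ^ 'n) set \<Rightarrow> bool" where
  "full_dimensional A \<longleftrightarrow> aff_dim (convex hull (int_to_real_vec ` A)) = int CARD('n)"

end

theory Submission
  imports Defs "HOL-Computational_Algebra.Polynomial"
begin


definition good1 :: "(complex \<Rightarrow> complex) \<Rightarrow> bool" where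
  "good1 f \<longleftrightarrow> (\<exists>q N. \<forall>t. t \<noteq> 0 \<longrightarrow> f t = poly q t / t ^ N)"

lemma good1_const: "good1 (\<lambda>t. k)"
  unfolding good1_def by (rule exI[of _ "[:k:]"], rule exI[of _ 0]) simp

lemma good1_id: "good1 (\<lambda>t. t)"
  unfolding good1_def by (rule exI[of _ "[:0,1:]"], rule exI[of _ 0]) simp

lemma good1_add:
  assumes "good1 f" "good1 g" shows "good1 (\<lambda>t. f t + g t)"
proof -
  obtain q1 N1 where 1: "\<forall>t. t \<noteq> 0 \<longrightarrow> f t = poly q1 t / t ^ N1" using assms(1) good1_def by blast
  obtain q2 N2 where 2: "\<forall>t. t \<noteq> 0 \<longrightarrow> g t = poly q2 t / t ^ N2" using assms(2) good1_def by blast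
  show ?thesis unfolding good1_def
  proof (rule exI[of _ "q1 * monom 1 N2 + q2 * monom 1 N1"], rule exI[of _ "N1 + N2"], intro allI impI)
    fix t :: complex assume t: "t \<noteq> 0"
    show "f t + g t = poly (q1 * monom 1 N2 + q2 * monom 1 N1) t / t ^ (N1 + N2)"
      using 1 2 t by (simp add: poly_monom field_simps power_add)
  qed
qed

lemma good1_mult:
  assumes "good1 f" "good1 g" shows "good1 (\<lambda>t. f t * g t)"
proof -
  obtain q1 N1 where 1: "\<forall>t. t \<noteq> 0 \<longrightarrow> f t = poly q1 t / t ^ N1" using assms(1) good1_def by blast
  obtain q2 N2 where 2: "\<forall>t. t \<noteq> 0 \<longrightarrow> g t = poly q2 t / t ^ N2" using assms(2) good1_def by blast
  show ?thesis unfolding good1_def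
  proof (rule exI[of _ "q1 * q2"], rule exI[of _ "N1 + N2"], intro allI impI)
    fix t :: complex assume t: "t \<noteq> 0"
    show "f t * g t = poly (q1 * q2) t / t ^ (N1 + N2)"
      using 1 2 t by (simp add: field_simps power_add)
  qed
qed

lemma good1_powi: "good1 (\<lambda>t. t powi k)"
proof (cases "k \<ge> 0")
  case True
  show ?thesis unfolding good1_def
  proof (rule exI[of _ "monom 1 (nat k)"], rule exI[of _ 0], intro allI impI)
    fix t :: complex assume "t \<noteq> 0"
    show "t powi k = poly (monom 1 (nat k)) t / t ^ 0"
      using True by (simp add: poly_monom power_int_def)
  qed
next
  case False
  show ?thesis unfolding good1_def
  proof (rule exI[of _ "1"], rule exI[of _ "nat (-k)"], intro allI impI)
    fix t :: complex assume "t \<noteq> 0"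
    show "t powi k = poly 1 t / t ^ nat (-k)"
      using False by (simp add: power_int_def field_simps)
  qed
qed

lemma good1_prod:
  assumes "finite S" "\<And>i. i \<in> S \<Longrightarrow> good1 (f i)"
  shows "good1 (\<lambda>t. \<Prod>i\<in>S. f i t)"
  using assms
proof (induction S rule: finite_induct)
  case empty then show ?case by (simp add: good1_const)
next
  case (insert x F)
  then show ?case by (simp add: good1_mult)
qed

lemma good1_upd: "good1 (\<lambda>t. (v(j:=t)) x)"
  by (cases "x = j") (simp_all add: good1_id good1_const)

lemma good1_upd_powi: "good1 (\<lambda>t. ((v(j:=t)) x) powi k)"
  by (cases "x = j") (simp_all add: good1_powi good1_const)

lemma poly_fun_good1:
  assumes "p \<in> poly_fun A" "\<And>a. a \<in> A \<Longrightarrow> good1 (\<lambda>t. F t a)"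
  shows "good1 (\<lambda>t. p (F t))"
  using assms
proof (induction p rule: poly_fun.induct)
  case (const k) then show ?case by (simp add: good1_const)
next
  case (var a) then show ?case by simp
next
  case (add p q) then show ?case by (simp add: good1_add)
next
  case (mult p q) then show ?case by (simp add: good1_mult)
qed

lemma vanish:
  fixes G :: "('i::finite \<Rightarrow> complex) \<Rightarrow> complex" and R :: "'i \<Rightarrow> complex set"
  assumes inf: "\<And>j. infinite (R j)" and nz: "\<And>j. 0 \<notin> R j"
    and g: "\<And>v j. good1 (\<lambda>t. G (v(j:=t)))"
    and box: "\<And>v. (\<forall>j. v j \<in> R j) \<Longrightarrow> G v = 0"
    and v: "\<forall>j. v j \<noteq> 0"
  shows "G v = 0"
proof -
  have main: "\<forall>v. (\<forall>j. v j \<noteq> 0) \<longrightarrow> (\<forall>j. j \<notin> J \<longrightarrow> v j \<in> R j) \<longrightarrow> G v = 0"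
    if "finite J" for J :: "'i set"
    using that
  proof (induction J rule: finite_induct)
    case empty show ?case
    proof (intro allI impI)
      fix v :: "'i \<Rightarrow> complex"
      assume "\<forall>j. v j \<noteq> 0" "\<forall>j. j \<notin> {} \<longrightarrow> v j \<in> R j"
      then have "\<forall>j. v j \<in> R j" by simp
      then show "G v = 0" by (rule box)
    qed
  next
    case (insert j J)
    show ?case
    proof (intro allI impI)
      fix v :: "'i \<Rightarrow> complex"
      assume v0: "\<forall>j. v j \<noteq> 0" and vR: "\<forall>i. i \<notin> insert j J \<longrightarrow> v i \<in> R i"
      obtain q N where qN: "\<forall>t. t \<noteq> 0 \<longrightarrow> G (v(j:=t)) = poly q t / t ^ N"
        using g[of v j] unfolding good1_def by (elim exE) (rule that)
      have "R j \<subseteq> {t. poly q t = 0}"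
      proof
        fix t assume t: "t \<in> R j"
        have t0: "t \<noteq> 0" using t nz by metis
        have a1: "\<forall>i. (v(j:=t)) i \<noteq> 0" using v0 t0 by simp
        have a2: "\<forall>i. i \<notin> J \<longrightarrow> (v(j:=t)) i \<in> R i"
        proof (intro allI impI)
          fix i assume "i \<notin> J"
          then show "(v(j:=t)) i \<in> R i" using vR t by (cases "i = j") auto
        qed
        have "G (v(j:=t)) = 0"
          using insert.IH a1 a2 by blast
        then show "t \<in> {t. poly q t = 0}" using qN t0 by simp
      qed
      then have "q = 0"
      proof (rule contrapos_pp)
        assume "q \<noteq> 0"
        then have "finite {t. poly q t = 0}" by (rule poly_roots_finite)
        then show "\<not> R j \<subseteq> {t. poly q t = 0}" using inf[of j] finite_subset by auto
      qed
      moreover have "G (v(j := v j)) = poly q (v j) / v j ^ N" using qN v0 by blast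
      ultimately show "G v = 0" by simp
    qed
  qed
  show ?thesis using main[of UNIV] v by simp
qed

lemma tau_tau: "sign_tau Ap Am (sign_tau Ap Am c) = c"
  by (simp add: sign_tau_def fun_eq_iff)

lemma poly_fun_tau:
  assumes "p \<in> poly_fun A" shows "(\<lambda>c. p (sign_tau Ap Am c)) \<in> poly_fun A"
  using assms
proof (induction p rule: poly_fun.induct)
  case (const k) then show ?case by (rule poly_fun.const)
next
  case (var a)
  show ?case
  proof (cases "a \<in> Am")
    case True
    have "(\<lambda>c. -1 * c a) \<in> poly_fun A"
      by (rule poly_fun.mult[OF poly_fun.const poly_fun.var[OF var]])
    then show ?thesis using True by (simp add: sign_tau_def)
  next
    case False
    show ?thesis using False poly_fun.var[OF var] by (simp add: sign_tau_def)
  qed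
next
  case (add p q) show ?case by (rule poly_fun.add[OF add.IH(1) add.IH(2)])
next
  case (mult p q) show ?case by (rule poly_fun.mult[OF mult.IH(1) mult.IH(2)])
qed

lemma tau_coeff: "sign_tau Ap Am c \<in> coeff_space A \<longleftrightarrow> c \<in> coeff_space A"
proof -
  have "\<And>a. sign_tau Ap Am c a = 0 \<longleftrightarrow> c a = 0" by (simp add: sign_tau_def)
  then show ?thesis by (simp add: coeff_space_def)
qed

lemma closed_tau:
  assumes "zariski_closed A V" shows "zariski_closed A (sign_tau Ap Am ` V)"
proof -
  obtain P where P: "P \<subseteq> poly_fun A" "V = {c \<in> coeff_space A. \<forall>p\<in>P. p c = 0}"
    using assms unfolding zariski_closed_def by (elim exE conjE) (rule that)
  let ?P = "(\<lambda>p c. p (sign_tau Ap Am c)) ` P"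
  have "?P \<subseteq> poly_fun A" using P(1) poly_fun_tau by blast
  moreover have "sign_tau Ap Am ` V = {c \<in> coeff_space A. \<forall>p\<in>?P. p c = 0}"
  proof (intro set_eqI iffI)
    fix c assume "c \<in> sign_tau Ap Am ` V"
    then obtain d where "d \<in> V" "c = sign_tau Ap Am d" by blast
    moreover have "c \<in> coeff_space A" using \<open>d \<in> V\<close> P(2) tau_coeff \<open>c = sign_tau Ap Am d\<close> by blast
    moreover have "\<forall>p\<in>?P. p c = 0"
    proof
      fix p' assume "p' \<in> ?P"
      then obtain p where "p \<in> P" "p' = (\<lambda>c. p (sign_tau Ap Am c))" by blast
      then show "p' c = 0" using \<open>d \<in> V\<close> P(2) \<open>c = sign_tau Ap Am d\<close> by (simp add: tau_tau)
    qed
    ultimately show "c \<in> {c \<in> coeff_space A. \<forall>p\<in>?P. p c = 0}" by blast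
  next
    fix c assume c: "c \<in> {c \<in> coeff_space A. \<forall>p\<in>?P. p c = 0}"
    have "sign_tau Ap Am c \<in> coeff_space A" using c by (simp add: tau_coeff)
    moreover have "\<forall>p\<in>P. p (sign_tau Ap Am c) = 0"
    proof
      fix p assume "p \<in> P"
      then have "(\<lambda>c. p (sign_tau Ap Am c)) \<in> ?P" by (rule imageI)
      moreover have "\<forall>p'\<in>?P. p' c = 0" using c by simp
      ultimately have "(\<lambda>c. p (sign_tau Ap Am c)) c = 0" by (rule bspec[rotated])
      then show "p (sign_tau Ap Am c) = 0" by simp
    qed
    ultimately have "sign_tau Ap Am c \<in> V" using P(2) by blast
    then show "c \<in> sign_tau Ap Am ` V" using tau_tau by (metis image_eqI)
  qed
  ultimately show ?thesis unfolding zariski_closed_def by blast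
qed

lemma in_closure: "x \<in> zariski_closure A S \<longleftrightarrow> (\<forall>V. zariski_closed A V \<longrightarrow> S \<subseteq> V \<longrightarrow> x \<in> V)"
  by (auto simp: zariski_closure_def)

lemma split_sum:
  fixes f :: "'a \<Rightarrow> 'b::ab_group_add"
  assumes "finite Ap" "finite Am" "Ap \<inter> Am = {}"
  shows "(\<Sum>a\<in>Ap \<union> Am. (if a \<in> Am then - f a else f a)) = (\<Sum>a\<in>Ap. f a) - (\<Sum>a\<in>Am. f a)"
proof -
  have "(\<Sum>a\<in>Ap \<union> Am. (if a \<in> Am then - f a else f a))
      = (\<Sum>a\<in>Ap. (if a \<in> Am then - f a else f a)) + (\<Sum>a\<in>Am. (if a \<in> Am then - f a else f a))"
    using assms by (simp add: sum.union_disjoint)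
  also have "\<dots> = (\<Sum>a\<in>Ap. f a) + (\<Sum>a\<in>Am. - f a)"
    using assms(3) by (intro arg_cong2[where f="(+)"] sum.cong) auto
  finally show ?thesis by (simp add: sum_negf)
qed



lemma lmono_cplx_inv:
  assumes "\<forall>i. z$i \<noteq> 0" shows "lmono_cplx z (-a) * lmono_cplx z a = 1"
proof -
  have "lmono_cplx z (-a) * lmono_cplx z a = (\<Prod>i\<in>UNIV. (z$i) powi (-(a$i)) * (z$i) powi (a$i))"
    unfolding lmono_cplx_def prod.distrib[symmetric] by simp
  also have "\<dots> = 1" using assms by (simp add: power_int_minus)
  finally show ?thesis .
qed

lemma lmono_real_inv:
  assumes "\<forall>i. x$i \<noteq> 0" shows "lmono_real x (-a) * lmono_real x a = 1"
proof -
  have "lmono_real x (-a) * lmono_real x a = (\<Prod>i\<in>UNIV. (x$i) powi (-(a$i)) * (x$i) powi (a$i))"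
    unfolding lmono_real_def prod.distrib[symmetric] by simp
  also have "\<dots> = 1" using assms by (simp add: power_int_minus)
  finally show ?thesis .
qed

lemma lmono_of_real: "lmono_cplx (\<chi> l. complex_of_real (x$l)) a = complex_of_real (lmono_real x a)"
  unfolding lmono_cplx_def lmono_real_def by (simp add: of_real_prod)

lemma lmono_real_pos: assumes "\<forall>i. x$i > 0" shows "lmono_real x a > 0"
  unfolding lmono_real_def using assms by (simp add: prod_pos zero_less_power_int)

lemma good1_lmono: "good1 (\<lambda>t. lmono_cplx (\<chi> l. (v(j:=t)) (Inr l)) b)"
  unfolding lmono_cplx_def vec_lambda_beta
  by (rule good1_prod) (simp, rule good1_upd_powi)

lemma infinite_of_real_image:
  assumes "infinite (S :: real set)" shows "infinite (complex_of_real ` S)"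
proof
  assume "finite (complex_of_real ` S)"
  moreover have "inj_on complex_of_real S" by (rule inj_onI) simp
  ultimately have "finite S" by (rule finite_imageD)
  then show False using assms by simp
qed



lemma core:
  fixes Ap Am :: "(int ^ 'n) set" and p :: "(int ^ 'n \<Rightarrow> complex) \<Rightarrow> complex"
    and d :: "int ^ 'n \<Rightarrow> complex" and z :: "complex ^ 'n"
  assumes fin: "finite Ap" "finite Am" and disj: "Ap \<inter> Am = {}"
    and p: "p \<in> poly_fun (Ap \<union> Am)"
    and pQ: "\<And>c. c \<in> pos_disc Ap Am \<Longrightarrow> p (\<lambda>a. complex_of_real (c a)) = 0"
    and c0: "c0 \<in> pos_disc Ap Am"
    and d: "d \<in> coeff_space (Ap \<union> Am)" and z: "\<forall>i. z$i \<noteq> 0"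
    and e0: "(\<Sum>a\<in>Ap \<union> Am. d a * lmono_cplx z a) = 0"
    and ei: "\<forall>i. (\<Sum>a\<in>Ap \<union> Am. d a * of_int (a$i) * lmono_cplx z a) = 0"
  shows "p (sign_tau Ap Am d) = 0"
proof -
  define A where "A = Ap \<union> Am"
  have finA: "finite A" using fin by (simp add: A_def)
  have c0': "(\<forall>a\<in>A. c0 a > 0) \<and> (\<exists>x :: real ^ 'n. (\<forall>i. x $ i > 0) \<and> critical_system_zero Ap Am c0 x)"
    using c0 unfolding pos_disc_def A_def by simp
  then obtain x0 :: "real ^ 'n" where x0: "\<forall>i. x0$i > 0" "critical_system_zero Ap Am c0 x0"
    by (elim conjE exE) (rule that)
  have c0p: "\<forall>a\<in>A. c0 a > 0" using c0' by simp
  define sg :: "int^'n \<Rightarrow> real" where "sg a = (if a \<in> Am then -1 else 1)" for a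
  define y0 where "y0 a = sg a * c0 a * lmono_real x0 a" for a
  define y where "y a = d a * lmono_cplx z a" for a
  define u1 where "u1 a = Re (y a) - y0 a" for a
  define u2 where "u2 a = Im (y a)" for a
  define W :: "'n option \<Rightarrow> int^'n \<Rightarrow> real"
    where "W k a = (case k of None \<Rightarrow> 1 | Some i \<Rightarrow> of_int (a$i))" for k a
  have split: "(\<Sum>a\<in>A. sg a * f a) = (\<Sum>a\<in>Ap. f a) - (\<Sum>a\<in>Am. f a)" for f :: "int^'n \<Rightarrow> real"
  proof -
    have "(\<Sum>a\<in>A. sg a * f a) = (\<Sum>a\<in>Ap \<union> Am. (if a \<in> Am then - f a else f a))"
      unfolding A_def sg_def by (rule sum.cong) auto
    also have "\<dots> = (\<Sum>a\<in>Ap. f a) - (\<Sum>a\<in>Am. f a)" by (rule split_sum[OF fin disj])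
    finally show ?thesis .
  qed
  have crit0: "(\<Sum>a\<in>Ap. c0 a * W k a * lmono_real x0 a) - (\<Sum>a\<in>Am. c0 a * W k a * lmono_real x0 a) = 0" for k
  proof (cases k)
    case None
    then show ?thesis using x0(2) by (simp add: W_def critical_system_zero_def signomial_def)
  next
    case (Some i)
    then show ?thesis using x0(2) by (simp add: W_def critical_system_zero_def toric_deriv_def)
  qed
  have sy0: "(\<Sum>a\<in>A. y0 a * W k a) = 0" for k
  proof -
    have "(\<Sum>a\<in>A. y0 a * W k a) = (\<Sum>a\<in>A. sg a * (c0 a * W k a * lmono_real x0 a))"
      by (rule sum.cong) (simp_all add: y0_def)
    also have "\<dots> = 0" using split crit0 by simp
    finally show ?thesis .
  qed
  have sy: "(\<Sum>a\<in>A. y a * complex_of_real (W k a)) = 0" for k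
  proof (cases k)
    case None
    then show ?thesis using e0 by (simp add: W_def y_def A_def)
  next
    case (Some i)
    have "(\<Sum>a\<in>A. y a * complex_of_real (W k a)) = (\<Sum>a\<in>Ap \<union> Am. d a * of_int (a$i) * lmono_cplx z a)"
      unfolding A_def by (rule sum.cong) (simp_all add: W_def y_def Some)
    then show ?thesis using ei by simp
  qed
  have su1: "(\<Sum>a\<in>A. u1 a * W k a) = 0" for k
  proof -
    have "(\<Sum>a\<in>A. u1 a * W k a) = (\<Sum>a\<in>A. Re (y a * complex_of_real (W k a))) - (\<Sum>a\<in>A. y0 a * W k a)"
      by (simp add: u1_def left_diff_distrib sum_subtractf)
    also have "\<dots> = Re (\<Sum>a\<in>A. y a * complex_of_real (W k a))" by (simp add: sy0 Re_sum)
    also have "\<dots> = 0" by (simp add: sy)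
    finally show ?thesis .
  qed
  have su2: "(\<Sum>a\<in>A. u2 a * W k a) = 0" for k
  proof -
    have "(\<Sum>a\<in>A. u2 a * W k a) = (\<Sum>a\<in>A. Im (y a * complex_of_real (W k a)))"
      by (simp add: u2_def)
    also have "\<dots> = Im (\<Sum>a\<in>A. y a * complex_of_real (W k a))" by (simp add: Im_sum)
    also have "\<dots> = 0" by (simp add: sy)
    finally show ?thesis .
  qed
  have sgsq: "sg a * sg a = 1" for a by (simp add: sg_def)
  have sgabs: "\<bar>sg a\<bar> = 1" for a by (simp add: sg_def)
  have sgy0: "sg a * y0 a > 0" if "a \<in> A" for a
  proof -
    have "sg a * y0 a = (sg a * sg a) * (c0 a * lmono_real x0 a)" by (simp add: y0_def)
    also have "\<dots> = c0 a * lmono_real x0 a" by (simp add: sgsq)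
    also have "\<dots> > 0" using c0p that lmono_real_pos[OF x0(1)] by simp
    finally show ?thesis .
  qed
  define D where "D a = sg a * y0 a / (\<bar>u1 a\<bar> + \<bar>u2 a\<bar> + 1)" for a
  have Dpos: "D a > 0" if "a \<in> A" for a
    unfolding D_def using sgy0[OF that] by (simp add: add_pos_nonneg)
  define del where "del = Min (insert 1 (D ` A))"
  have del_pos: "del > 0" unfolding del_def using finA Dpos by (simp add: Min_gr_iff)
  have del_le: "del \<le> D a" if "a \<in> A" for a unfolding del_def using finA that by simp
  have pos: "sg a * (y0 a + r1 * u1 a + r2 * u2 a) > 0"
    if a: "a \<in> A" and r: "0 < r1" "r1 < del" "0 < r2" "r2 < del" for a r1 r2
  proof -
    have s: "\<bar>u1 a\<bar> + \<bar>u2 a\<bar> + 1 > 0" by simp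
    have DS: "D a * (\<bar>u1 a\<bar> + \<bar>u2 a\<bar> + 1) = sg a * y0 a" unfolding D_def using s by simp
    have "\<bar>sg a * (r1 * u1 a + r2 * u2 a)\<bar> = \<bar>r1 * u1 a + r2 * u2 a\<bar>" by (simp add: abs_mult sgabs)
    also have "\<dots> \<le> r1 * \<bar>u1 a\<bar> + r2 * \<bar>u2 a\<bar>" using r by (simp add: abs_triangle_ineq[THEN order_trans] abs_mult)
    also have "\<dots> \<le> D a * \<bar>u1 a\<bar> + D a * \<bar>u2 a\<bar>"
      using r del_le[OF a] by (intro add_mono mult_right_mono) auto
    finally have "\<bar>sg a * (r1 * u1 a + r2 * u2 a)\<bar> \<le> D a * \<bar>u1 a\<bar> + D a * \<bar>u2 a\<bar>" .
    moreover have "sg a * (y0 a + r1 * u1 a + r2 * u2 a) = sg a * y0 a + sg a * (r1 * u1 a + r2 * u2 a)"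
      by (simp add: algebra_simps)
    moreover have "sg a * y0 a = D a * \<bar>u1 a\<bar> + D a * \<bar>u2 a\<bar> + D a" using DS by (simp add: algebra_simps)
    ultimately show ?thesis using Dpos[OF a] by linarith
  qed
  define Phi :: "(bool + 'n \<Rightarrow> complex) \<Rightarrow> int ^ 'n \<Rightarrow> complex"
    where "Phi v a = (if a \<in> A then complex_of_real (sg a) * (complex_of_real (y0 a) + v (Inl True) * complex_of_real (u1 a)
        + v (Inl False) * complex_of_real (u2 a)) * lmono_cplx (\<chi> l. v (Inr l)) (-a) else 0)" for v a
  define R :: "bool + 'n \<Rightarrow> complex set"
    where "R j = (case j of Inl b \<Rightarrow> complex_of_real ` {0<..<del} | Inr l \<Rightarrow> complex_of_real ` {0<..})" for j
  define vs :: "bool + 'n \<Rightarrow> complex"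
    where "vs j = (case j of Inl b \<Rightarrow> (if b then 1 else \<i>) | Inr l \<Rightarrow> z$l)" for j
  have "p (Phi vs) = 0"
  proof (rule vanish[where G="\<lambda>v. p (Phi v)" and R=R])
    fix j show "infinite (R j)"
      by (cases j) (simp_all add: R_def infinite_of_real_image del_pos infinite_Ioi)
  next
    fix j show "0 \<notin> R j"
      by (cases j) (auto simp: R_def)
  next
    fix v j
    show "good1 (\<lambda>t. p (Phi (v(j := t))))"
    proof (rule poly_fun_good1[OF p])
      fix a assume "a \<in> Ap \<union> Am"
      then have "a \<in> A" by (simp add: A_def)
      then show "good1 (\<lambda>t. Phi (v(j := t)) a)"
        unfolding Phi_def
        by (simp only: if_True) (intro good1_mult good1_add good1_const good1_upd good1_lmono)
    qed
  next
    fix v assume vR: "\<forall>j. v j \<in> R j"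
    obtain r1 where r1: "v (Inl True) = complex_of_real r1" "0 < r1" "r1 < del"
      using vR[rule_format, of "Inl True"] by (auto simp: R_def)
    obtain r2 where r2: "v (Inl False) = complex_of_real r2" "0 < r2" "r2 < del"
      using vR[rule_format, of "Inl False"] by (auto simp: R_def)
    define x :: "real ^ 'n" where "x = (\<chi> l. Re (v (Inr l)))"
    have xv: "v (Inr l) = complex_of_real (x$l) \<and> x$l > 0" for l
      using vR[rule_format, of "Inr l"] by (auto simp: R_def x_def)
    have xpos: "\<forall>i. x$i > 0" using xv by simp
    have xnz: "\<forall>i. x$i \<noteq> 0" using xpos by (simp add: less_imp_neq[symmetric])
    have vx: "(\<chi> l. v (Inr l)) = (\<chi> l. complex_of_real (x$l))" using xv by (simp add: vec_eq_iff)
    define Y where "Y a = y0 a + r1 * u1 a + r2 * u2 a" for a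
    define c' where "c' a = (if a \<in> A then sg a * Y a * lmono_real x (-a) else 0)" for a
    have Phic: "Phi v = (\<lambda>a. complex_of_real (c' a))"
    proof
      fix a show "Phi v a = complex_of_real (c' a)"
        by (simp add: Phi_def c'_def vx lmono_of_real r1 r2 Y_def)
    qed
    have c'lm: "c' a * lmono_real x a = sg a * Y a" if "a \<in> A" for a
    proof -
      have "c' a * lmono_real x a = sg a * Y a * (lmono_real x (-a) * lmono_real x a)"
        using that by (simp add: c'_def)
      then show ?thesis using lmono_real_inv[OF xnz] by simp
    qed
    have crit: "(\<Sum>a\<in>Ap. c' a * W k a * lmono_real x a) - (\<Sum>a\<in>Am. c' a * W k a * lmono_real x a) = 0" for k
    proof -
      have "(\<Sum>a\<in>Ap. c' a * W k a * lmono_real x a) - (\<Sum>a\<in>Am. c' a * W k a * lmono_real x a)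
          = (\<Sum>a\<in>A. sg a * (c' a * W k a * lmono_real x a))" by (rule split[symmetric])
      also have "\<dots> = (\<Sum>a\<in>A. Y a * W k a)"
      proof (rule sum.cong)
        fix a assume a: "a \<in> A"
        have "sg a * (c' a * W k a * lmono_real x a) = sg a * (c' a * lmono_real x a) * W k a" by simp
        also have "\<dots> = (sg a * sg a) * Y a * W k a" using c'lm[OF a] by simp
        finally show "sg a * (c' a * W k a * lmono_real x a) = Y a * W k a" by (simp add: sgsq)
      qed simp
      also have "\<dots> = (\<Sum>a\<in>A. y0 a * W k a) + r1 * (\<Sum>a\<in>A. u1 a * W k a) + r2 * (\<Sum>a\<in>A. u2 a * W k a)"
        by (simp add: Y_def algebra_simps sum.distrib sum_distrib_left)
      also have "\<dots> = 0" by (simp add: sy0 su1 su2)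
      finally show ?thesis .
    qed
    have "c' \<in> pos_disc Ap Am"
      unfolding pos_disc_def
    proof (intro CollectI conjI)
      show "\<forall>a\<in>Ap \<union> Am. c' a > 0"
      proof
        fix a assume a: "a \<in> Ap \<union> Am"
        then have aA: "a \<in> A" by (simp add: A_def)
        have "sg a * Y a > 0" unfolding Y_def using pos[OF aA r1(2,3) r2(2,3)] .
        moreover have "lmono_real x (-a) > 0" using lmono_real_pos[OF xpos] .
        ultimately show "c' a > 0" using aA by (simp add: c'_def)
      qed
    next
      show "\<forall>a. a \<notin> Ap \<union> Am \<longrightarrow> c' a = 0" by (simp add: c'_def A_def)
    next
      have "critical_system_zero Ap Am c' x"
        unfolding critical_system_zero_def signomial_def toric_deriv_def
        using crit[of None] crit[of "Some i" for i] by (simp add: W_def)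
      then show "\<exists>x :: real ^ 'n. (\<forall>i. x $ i > 0) \<and> critical_system_zero Ap Am c' x"
        using xpos by blast
    qed
    then show "p (Phi v) = 0" unfolding Phic by (rule pQ)
  next
    show "\<forall>j. vs j \<noteq> 0" using z by (simp add: vs_def split: sum.split)
  qed
  moreover have "Phi vs = sign_tau Ap Am d"
  proof
    fix a
    show "Phi vs a = sign_tau Ap Am d a"
    proof (cases "a \<in> A")
      case True
      have vz: "(\<chi> l. vs (Inr l)) = z" by (simp add: vs_def vec_eq_iff)
      have ry: "complex_of_real (y0 a) + complex_of_real (u1 a) + \<i> * complex_of_real (u2 a) = y a"
        by (simp add: u1_def u2_def complex_eq_iff)
      have "Phi vs a = complex_of_real (sg a) * y a * lmono_cplx z (-a)"
        using True ry by (simp add: Phi_def vs_def vz)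
      also have "\<dots> = complex_of_real (sg a) * d a * (lmono_cplx z (-a) * lmono_cplx z a)"
        by (simp add: y_def)
      also have "\<dots> = complex_of_real (sg a) * d a" using lmono_cplx_inv[OF z] by simp
      also have "\<dots> = sign_tau Ap Am d a" by (simp add: sg_def sign_tau_def)
      finally show ?thesis .
    next
      case False
      then have "d a = 0" using d by (simp add: coeff_space_def A_def)
      then show ?thesis using False by (simp add: Phi_def sign_tau_def)
    qed
  qed
  ultimately show ?thesis by simp
qed



theorem proposition2p6:
  fixes Ap Am :: "(int ^ 'n) set"
  assumes "finite Ap" and "finite Am" and "Ap \<inter> Am = {}"
    and "full_dimensional (Ap \<union> Am)"
    and "pos_disc Ap Am \<noteq> {}"
  shows "sign_tau Ap Am ` A_disc_variety (Ap \<union> Am)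
       = zariski_closure (Ap \<union> Am) ((\<lambda>c a. complex_of_real (c a)) ` pos_disc Ap Am)"
proof -
  define A where "A = Ap \<union> Am"
  define D where "D = {c \<in> coeff_space A. \<exists>z :: complex ^ 'n. (\<forall>i. z $ i \<noteq> 0) \<and>
        (\<Sum>a\<in>A. c a * lmono_cplx z a) = 0 \<and>
        (\<forall>i. (\<Sum>a\<in>A. c a * of_int (a $ i) * lmono_cplx z a) = 0)}"
  define Q where "Q = (\<lambda>c a. complex_of_real (c a)) ` pos_disc Ap Am"
  define t where "t = sign_tau Ap Am"
  have tt: "t (t c) = c" for c unfolding t_def by (rule tau_tau)
  have disc: "A_disc_variety A = zariski_closure A D" unfolding A_disc_variety_def D_def ..
  obtain c0 where c0: "c0 \<in> pos_disc Ap Am" using assms(5) by blast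
  have key: "t d \<in> V" if V: "zariski_closed A V" "Q \<subseteq> V" and dD: "d \<in> D" for V d
  proof -
    obtain P where P: "P \<subseteq> poly_fun A" "V = {c \<in> coeff_space A. \<forall>p\<in>P. p c = 0}"
      using V(1) unfolding zariski_closed_def by (elim exE conjE) (rule that)
    have dc: "d \<in> coeff_space A" using dD by (simp add: D_def)
    obtain z :: "complex ^ 'n" where z: "\<forall>i. z $ i \<noteq> 0" "(\<Sum>a\<in>A. d a * lmono_cplx z a) = 0"
        "\<forall>i. (\<Sum>a\<in>A. d a * of_int (a $ i) * lmono_cplx z a) = 0"
      using dD unfolding D_def by (elim CollectE conjE exE) (rule that)
    have "t d \<in> coeff_space A" using dc by (simp add: t_def tau_coeff)
    moreover have "\<forall>p\<in>P. p (t d) = 0"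
    proof
      fix p assume pP: "p \<in> P"
      have pQ: "p (\<lambda>a. complex_of_real (c a)) = 0" if "c \<in> pos_disc Ap Am" for c
      proof -
        have "(\<lambda>a. complex_of_real (c a)) \<in> Q" unfolding Q_def using that by (rule imageI)
        then have "(\<lambda>a. complex_of_real (c a)) \<in> V" using V(2) by (rule subsetD[rotated])
        then show ?thesis using pP P(2) by simp
      qed
      have "p \<in> poly_fun (Ap \<union> Am)" using pP P(1) A_def by auto
      from core[OF assms(1,2,3) this pQ c0 dc[unfolded A_def] z(1) z(2)[unfolded A_def] z(3)[unfolded A_def]]
      show "p (t d) = 0" by (simp add: t_def)
    qed
    ultimately show ?thesis using P(2) by simp
  qed
  have QD: "Q \<subseteq> t ` D"
  proof
    fix C assume "C \<in> Q"
    then obtain c where c: "c \<in> pos_disc Ap Am" and C: "C = (\<lambda>a. complex_of_real (c a))"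
      unfolding Q_def by (elim imageE) simp
    have cz: "\<forall>a. a \<notin> A \<longrightarrow> c a = 0" using c by (simp add: pos_disc_def A_def)
    have "\<exists>x :: real ^ 'n. (\<forall>i. x $ i > 0) \<and> critical_system_zero Ap Am c x"
      using c by (simp add: pos_disc_def)
    then obtain x :: "real ^ 'n" where x: "\<forall>i. x $ i > 0" "critical_system_zero Ap Am c x"
      by (elim exE conjE) (rule that)
    define z :: "complex ^ 'n" where "z = (\<chi> l. complex_of_real (x$l))"
    have znz: "\<forall>i. z $ i \<noteq> 0" using x(1) by (simp add: z_def less_imp_neq[symmetric])
    have gen: "(\<Sum>a\<in>A. t C a * complex_of_real (w a) * lmono_cplx z a)
        = complex_of_real ((\<Sum>a\<in>Ap. c a * w a * lmono_real x a) - (\<Sum>a\<in>Am. c a * w a * lmono_real x a))"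
      for w :: "int ^ 'n \<Rightarrow> real"
    proof -
      have "(\<Sum>a\<in>A. t C a * complex_of_real (w a) * lmono_cplx z a)
          = (\<Sum>a\<in>Ap \<union> Am. (if a \<in> Am then - complex_of_real (c a * w a * lmono_real x a)
               else complex_of_real (c a * w a * lmono_real x a)))"
        unfolding A_def by (rule sum.cong) (simp_all add: t_def sign_tau_def C z_def lmono_of_real)
      also have "\<dots> = (\<Sum>a\<in>Ap. complex_of_real (c a * w a * lmono_real x a))
           - (\<Sum>a\<in>Am. complex_of_real (c a * w a * lmono_real x a))"
        by (rule split_sum[OF assms(1,2,3)])
      finally show ?thesis by simp
    qed
    have "t C \<in> D"
      unfolding D_def
    proof (intro CollectI conjI)
      show "t C \<in> coeff_space A" using cz by (simp add: t_def C coeff_space_def sign_tau_def)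
      have s0: "(\<Sum>a\<in>Ap. c a * 1 * lmono_real x a) - (\<Sum>a\<in>Am. c a * 1 * lmono_real x a) = 0"
        using x(2) by (simp add: critical_system_zero_def signomial_def)
      have "(\<Sum>a\<in>A. t C a * complex_of_real 1 * lmono_cplx z a) = 0"
        unfolding gen[of "\<lambda>a. 1"] s0 by simp
      then have "(\<Sum>a\<in>A. t C a * lmono_cplx z a) = 0" by simp
      moreover have "(\<Sum>a\<in>A. t C a * of_int (a $ i) * lmono_cplx z a) = 0" for i
      proof -
        have si: "(\<Sum>a\<in>Ap. c a * of_int (a $ i) * lmono_real x a) - (\<Sum>a\<in>Am. c a * of_int (a $ i) * lmono_real x a) = 0"
          using x(2) by (simp add: critical_system_zero_def toric_deriv_def)
        have "(\<Sum>a\<in>A. t C a * complex_of_real (of_int (a $ i)) * lmono_cplx z a) = 0"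
          unfolding gen[of "\<lambda>a. of_int (a $ i)"] si by simp
        then show ?thesis by simp
      qed
      ultimately show "\<exists>z :: complex ^ 'n. (\<forall>i. z $ i \<noteq> 0) \<and>
        (\<Sum>a\<in>A. t C a * lmono_cplx z a) = 0 \<and>
        (\<forall>i. (\<Sum>a\<in>A. t C a * of_int (a $ i) * lmono_cplx z a) = 0)" using znz by blast
    qed
    then have "t (t C) \<in> t ` D" by (rule imageI)
    then show "C \<in> t ` D" by (simp add: tt)
  qed
  have closed_t: "zariski_closed A (t ` V)" if "zariski_closed A V" for V
    unfolding t_def using that by (rule closed_tau)
  have img: "t ` V = {c. t c \<in> V}" for V
  proof (intro set_eqI iffI)
    fix c assume "c \<in> t ` V" then obtain w where "w \<in> V" "c = t w" by (elim imageE)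
    then show "c \<in> {c. t c \<in> V}" by (simp add: tt)
  next
    fix c assume "c \<in> {c. t c \<in> V}"
    then have "t (t c) \<in> t ` V" by simp
    then show "c \<in> t ` V" by (simp add: tt)
  qed
  have "t ` zariski_closure A D = zariski_closure A Q"
  proof (intro set_eqI iffI)
    fix x assume "x \<in> t ` zariski_closure A D"
    then obtain d where d: "d \<in> zariski_closure A D" "x = t d" by (elim imageE)
    show "x \<in> zariski_closure A Q"
      unfolding in_closure
    proof (intro allI impI)
      fix V assume V: "zariski_closed A V" "Q \<subseteq> V"
      have "D \<subseteq> t ` V"
      proof
        fix e assume "e \<in> D"
        then have "t e \<in> V" using key V by blast
        then show "e \<in> t ` V" by (simp add: img)
      qed
      then have "d \<in> t ` V" using d(1) closed_t[OF V(1)] unfolding in_closure by blast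
      then show "x \<in> V" using d(2) by (simp add: img)
    qed
  next
    fix x assume x: "x \<in> zariski_closure A Q"
    have "t x \<in> zariski_closure A D"
      unfolding in_closure
    proof (intro allI impI)
      fix V assume V: "zariski_closed A V" "D \<subseteq> V"
      have "Q \<subseteq> t ` V" using QD V(2) by (rule subset_trans[OF _ image_mono])
      then have "x \<in> t ` V" using x closed_t[OF V(1)] unfolding in_closure by blast
      then show "t x \<in> V" by (simp add: img)
    qed
    then have "t (t x) \<in> t ` zariski_closure A D" by (rule imageI)
    then show "x \<in> t ` zariski_closure A D" by (simp add: tt)
  qed
  then have "sign_tau Ap Am ` A_disc_variety A = zariski_closure A Q" by (simp only: disc t_def)
  then show ?thesis by (simp only: A_def Q_def)
qed

end
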